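(* Let $A\in\mathbb{R}^{n\times n}$. Then for $k>1$, $$A_\star^k=A_\star^{k-1}-\mathcal{U}\big(A\,\mathcal{U}(A^TA_\star^{k-1})\big),\qquad A_\star^1=I_n-\mathcal{U}\big(A\,\mathcal{U}(A^T)\big),$$ and for all $1\le j\le n$ and $k>1$, $$(A_\star^k)_{1:j,j}=(I_j-A|_{j\times j}A|_{j\times j}^T)(A_\star^{k-1})_{1:j,j}.$$ Moreover, let $M\in\mathbb{R}^{n\times n}$ and $\alpha>0$ be such that $\max_{1\le j\le n}\|I_j-\alpha M|_{j\times j}M|_{j\times j}^T\|_{S_\infty}<1$, and set $A:=\sqrt{\alpha}M$. Then $M$ has an $LU$-factorization $M=LU$ with $L$ unit lower triangular and $U$ upper triangular, and $$U^{-1}=\alpha\,\mathcal{U}\Big(M^T\Big(I_n+\sum_{m=1}^\infty A_\star^m\Big)\Big).$$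
   Context: $I_j$ is the $j\times j$ identity; $M|_{j\times j}$ denotes the upper left $j\times j$ submatrix of $M$; $M_{i:j,k:l}$ denotes the submatrix with rows $i..j$ and columns $k..l$. $\mathcal{U}(M)_{ij}:=M_{ij}$ for $i\le j$, $0$ for $i>j$. For $A\in\mathbb{R}^{n\times n}$ and $k\in\mathbb{N}$, $A_\star^k\in\mathbb{R}^{n\times n}$ is defined by $(A_\star^k)_{ij}:=\big((I_j-A|_{j\times j}A|_{j\times j}^T)^k\big)_{ij}$ for $i\le j$ and $(A_\star^k)_{ij}:=0$ for $i>j$. $\|\cdot\|_{S_\infty}$ is the spectral norm. *)

theory Defs
  imports Complex_Main "Jordan_Normal_Form.Matrix"
begin

text \<open>Matrices are Jordan_Normal_Form matrices, indices are 0-based.\<close>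

definition ul_sub :: "real mat \<Rightarrow> nat \<Rightarrow> real mat" where
  "ul_sub A j = mat j j (\<lambda>(i,l). A $$ (i,l))"

definition triu :: "real mat \<Rightarrow> real mat" where
  "triu M = mat (dim_row M) (dim_col M) (\<lambda>(i,j). if i \<le> j then M $$ (i,j) else 0)"

definition star_pow :: "real mat \<Rightarrow> nat \<Rightarrow> real mat" where
  "star_pow A k = mat (dim_row A) (dim_row A) (\<lambda>(i,j).
     if i \<le> j then ((1\<^sub>m (j+1) - ul_sub A (j+1) * (ul_sub A (j+1))\<^sup>T) ^\<^sub>m k) $$ (i,j)
     else 0)"

text \<open>For 1-based j: the column vector M_{1:j, j} (rows 1..j of column j).\<close>
definition col_top :: "real mat \<Rightarrow> nat \<Rightarrow> real vec" where
  "col_top M j = vec j (\<lambda>i. M $$ (i, j - 1))"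

definition spec_norm :: "real mat \<Rightarrow> real" where
  "spec_norm M = Sup {sqrt ((M *\<^sub>v x) \<bullet> (M *\<^sub>v x)) | x. x \<in> carrier_vec (dim_col M) \<and> x \<bullet> x = 1}"

definition unit_lower_triangular :: "real mat \<Rightarrow> bool" where
  "unit_lower_triangular L \<longleftrightarrow>
     (\<forall>i < dim_row L. L $$ (i,i) = 1 \<and> (\<forall>j. i < j \<and> j < dim_col L \<longrightarrow> L $$ (i,j) = 0))"

end

theory Submission
  imports Defs "Jordan_Normal_Form.Determinant"
begin


lemma mult_entry:
  assumes "A \<in> carrier_mat n m" "B \<in> carrier_mat m p" "i < n" "j < p"
  shows "(A * B) $$ (i,j) = (\<Sum>l<m. A $$ (i,l) * B $$ (l,j))"
  using assms by (auto simp: scalar_prod_def atLeast0LessThan intro!: sum.cong)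

lemma sum_restrict:
  assumes "j < n"
  shows "(\<Sum>l<n. (if l \<le> j then f l else 0)) = (\<Sum>l<Suc j. f l)"
proof -
  have "(\<Sum>l<n. (if l \<le> j then f l else 0)) = (\<Sum>l\<in>{l\<in>{..<n}. l \<le> j}. f l)"
    by (rule sum.inter_filter[symmetric]) simp
  also have "{l\<in>{..<n}. l \<le> j} = {..<Suc j}" using assms by auto
  finally show ?thesis .
qed

lemma pow_mat_Suc_left:
  assumes "A \<in> carrier_mat n n"
  shows "A ^\<^sub>m (Suc k) = A * A ^\<^sub>m k"
proof (induction k)
  case 0 then show ?case using assms by simp
next
  case (Suc k)
  have "A ^\<^sub>m Suc (Suc k) = (A * A ^\<^sub>m k) * A" using Suc by simp
  also have "\<dots> = A * (A ^\<^sub>m k * A)" using assoc_mult_mat[OF assms pow_carrier_mat[OF assms] assms] by simp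
  finally show ?case by simp
qed

definition Pm :: "real mat \<Rightarrow> nat \<Rightarrow> real mat" where
  "Pm A s = 1\<^sub>m s - ul_sub A s * (ul_sub A s)\<^sup>T"

lemma Pm_carrier[simp]: "Pm A s \<in> carrier_mat s s"
  unfolding Pm_def ul_sub_def by (rule minus_carrier_mat) auto

lemma Pm_entry:
  assumes "i < s" "j < s"
  shows "Pm A s $$ (i,j) = (if i = j then 1 else 0) - (\<Sum>l<s. A $$ (i,l) * A $$ (j,l))"
proof -
  have "(ul_sub A s * (ul_sub A s)\<^sup>T) $$ (i,j) = (\<Sum>l<s. ul_sub A s $$ (i,l) * (ul_sub A s)\<^sup>T $$ (l,j))"
    by (rule mult_entry[of _ s s _ s]) (use assms in \<open>auto simp: ul_sub_def\<close>)
  also have "\<dots> = (\<Sum>l<s. A $$ (i,l) * A $$ (j,l))"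
    using assms by (auto simp: ul_sub_def intro!: sum.cong)
  finally show ?thesis using assms by (simp add: Pm_def ul_sub_def)
qed

lemma star_entry:
  assumes "i \<le> j" "j < dim_row A"
  shows "star_pow A k $$ (i,j) = (Pm A (Suc j) ^\<^sub>m k) $$ (i,j)"
  using assms by (simp add: star_pow_def Pm_def)

lemma star_low:
  assumes "j < i" "i < dim_row A"
  shows "star_pow A k $$ (i,j) = 0"
  using assms by (simp add: star_pow_def)



lemma triu_entry:
  "i < dim_row X \<Longrightarrow> j < dim_col X \<Longrightarrow> triu X $$ (i,j) = (if i \<le> j then X $$ (i,j) else 0)"
  by (simp add: triu_def)

lemma triu_dims[simp]: "dim_row (triu X) = dim_row X" "dim_col (triu X) = dim_col X"
  by (simp_all add: triu_def)

lemma triu_carrier: "X \<in> carrier_mat a b \<Longrightarrow> triu X \<in> carrier_mat a b"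
  unfolding carrier_mat_def triu_def by simp

lemma star_carrier: "A \<in> carrier_mat n n \<Longrightarrow> star_pow A k \<in> carrier_mat n n"
  unfolding carrier_mat_def star_pow_def by simp

lemma part1a:
  assumes A: "A \<in> carrier_mat n n"
  shows "star_pow A 1 = 1\<^sub>m n - triu (A * triu (A\<^sup>T))"
proof (rule eq_matI)
  fix i j assume ij: "i < dim_row (1\<^sub>m n - triu (A * triu (A\<^sup>T)))" "j < dim_col (1\<^sub>m n - triu (A * triu (A\<^sup>T)))"
  have dA: "dim_row A = n" "dim_col A = n" using A by auto
  from ij have i: "i < n" and j: "j < n" by (simp_all add: dA)
  show "star_pow A 1 $$ (i,j) = (1\<^sub>m n - triu (A * triu (A\<^sup>T))) $$ (i,j)"
  proof (cases "i \<le> j")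
    case True
    have "star_pow A 1 $$ (i,j) = Pm A (Suc j) $$ (i,j)"
      using star_entry[OF True, of A 1] A j by simp
    also have "\<dots> = (if i = j then 1 else 0) - (\<Sum>l<Suc j. A $$ (i,l) * A $$ (j,l))"
      using Pm_entry True by simp
    also have "(\<Sum>l<Suc j. A $$ (i,l) * A $$ (j,l)) = (\<Sum>l<n. if l \<le> j then A $$ (i,l) * A $$ (j,l) else 0)"
      by (rule sum_restrict[OF j, symmetric])
    also have "\<dots> = (\<Sum>l<n. A $$ (i,l) * triu (A\<^sup>T) $$ (l,j))"
    proof (rule sum.cong[OF refl])
      fix l assume "l \<in> {..<n}"
      then show "(if l \<le> j then A $$ (i,l) * A $$ (j,l) else 0) = A $$ (i,l) * triu (A\<^sup>T) $$ (l,j)"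
        using A j by (simp add: triu_entry)
    qed
    also have "\<dots> = (A * triu (A\<^sup>T)) $$ (i,j)"
      by (rule mult_entry[of _ n n _ n, symmetric]) (use A i j in auto)
    finally show ?thesis using True A i j by (simp add: triu_entry)
  next
    case False
    then show ?thesis using A i j by (simp add: star_low triu_entry)
  qed
next
  show "dim_row (star_pow A 1) = dim_row (1\<^sub>m n - triu (A * triu (A\<^sup>T)))"
    using A by (simp add: star_pow_def)
next
  show "dim_col (star_pow A 1) = dim_col (1\<^sub>m n - triu (A * triu (A\<^sup>T)))"
    using A by (simp add: star_pow_def)
qed



lemma mv_entry:
  assumes "A \<in> carrier_mat r c" "dim_vec v = c" "i < r"
  shows "(A *\<^sub>v v) $ i = (\<Sum>l<c. A $$ (i,l) * v $ l)"
  using assms by (auto simp: scalar_prod_def atLeast0LessThan intro!: sum.cong)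

lemma Pm_pow_carrier: "Pm A s ^\<^sub>m k \<in> carrier_mat s s"
  by (rule pow_carrier_mat[OF Pm_carrier])

lemma Pm_pow_Suc_entry:
  assumes "i < s" "j < s"
  shows "(Pm A s ^\<^sub>m Suc k) $$ (i,j) = (\<Sum>m<s. Pm A s $$ (i,m) * (Pm A s ^\<^sub>m k) $$ (m,j))"
proof -
  have "(Pm A s ^\<^sub>m Suc k) $$ (i,j) = (Pm A s * Pm A s ^\<^sub>m k) $$ (i,j)"
    using pow_mat_Suc_left[OF Pm_carrier] by simp
  also have "\<dots> = (\<Sum>m<s. Pm A s $$ (i,m) * (Pm A s ^\<^sub>m k) $$ (m,j))"
    by (rule mult_entry[OF Pm_carrier Pm_pow_carrier assms])
  finally show ?thesis .
qed

lemma Pm_pow_rec: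
  assumes ij: "i < s" "j < s"
  shows "(Pm A s ^\<^sub>m Suc k) $$ (i,j) = (Pm A s ^\<^sub>m k) $$ (i,j)
     - (\<Sum>l<s. A $$ (i,l) * (\<Sum>m<s. A $$ (m,l) * (Pm A s ^\<^sub>m k) $$ (m,j)))"
proof -
  define r where "r m = (Pm A s ^\<^sub>m k) $$ (m,j)" for m
  have "(Pm A s ^\<^sub>m Suc k) $$ (i,j) = (\<Sum>m<s. Pm A s $$ (i,m) * r m)"
    unfolding r_def by (rule Pm_pow_Suc_entry[OF ij])
  also have "\<dots> = (\<Sum>m<s. (if m = i then r m else 0) - (\<Sum>l<s. A $$ (i,l) * A $$ (m,l) * r m))"
  proof (rule sum.cong[OF refl])
    fix m assume "m \<in> {..<s}"
    then have m: "m < s" by simp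
    show "Pm A s $$ (i,m) * r m = (if m = i then r m else 0) - (\<Sum>l<s. A $$ (i,l) * A $$ (m,l) * r m)"
      using Pm_entry[OF ij(1) m, of A] by (simp add: left_diff_distrib sum_distrib_right)
  qed
  also have "\<dots> = r i - (\<Sum>m<s. \<Sum>l<s. A $$ (i,l) * A $$ (m,l) * r m)"
    using ij by (simp add: sum_subtractf)
  also have "(\<Sum>m<s. \<Sum>l<s. A $$ (i,l) * A $$ (m,l) * r m) = (\<Sum>l<s. A $$ (i,l) * (\<Sum>m<s. A $$ (m,l) * r m))"
    by (subst sum.swap) (simp add: sum_distrib_left mult.assoc)
  finally show ?thesis unfolding r_def .
qed

lemma part1b:
  assumes A: "A \<in> carrier_mat n n" and k: "k > 1"
  shows "star_pow A k = star_pow A (k - 1) - triu (A * triu (A\<^sup>T * star_pow A (k - 1)))"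
proof -
  obtain k' where kk: "k = Suc k'" using k by (cases k) auto
  have dA: "dim_row A = n" "dim_col A = n" using A by auto
  have SC: "star_pow A k' \<in> carrier_mat n n" by (rule star_carrier[OF A])
  have AT: "A\<^sup>T \<in> carrier_mat n n" using A by simp
  show ?thesis
  proof (rule eq_matI)
    show "dim_row (star_pow A k) = dim_row (star_pow A (k - 1) - triu (A * triu (A\<^sup>T * star_pow A (k - 1))))"
      using dA by (simp add: star_pow_def)
  next
    show "dim_col (star_pow A k) = dim_col (star_pow A (k - 1) - triu (A * triu (A\<^sup>T * star_pow A (k - 1))))"
      using dA by (simp add: star_pow_def)
  next
    fix i j assume ij: "i < dim_row (star_pow A (k - 1) - triu (A * triu (A\<^sup>T * star_pow A (k - 1))))"
      "j < dim_col (star_pow A (k - 1) - triu (A * triu (A\<^sup>T * star_pow A (k - 1))))"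
    from ij have i: "i < n" and j: "j < n" by (simp_all add: dA star_pow_def)
    have km: "k - 1 = k'" using kk by simp
    show "star_pow A k $$ (i,j) = (star_pow A (k - 1) - triu (A * triu (A\<^sup>T * star_pow A (k - 1)))) $$ (i,j)"
    proof (cases "i \<le> j")
      case True
      define R where "R = Pm A (Suc j) ^\<^sub>m k'"
      have X: "(A\<^sup>T * star_pow A k') $$ (l,j) = (\<Sum>m<Suc j. A $$ (m,l) * R $$ (m,j))" if l: "l < n" for l
      proof -
        have "(A\<^sup>T * star_pow A k') $$ (l,j) = (\<Sum>m<n. A\<^sup>T $$ (l,m) * star_pow A k' $$ (m,j))"
          by (rule mult_entry[OF AT SC l j])
        also have "\<dots> = (\<Sum>m<n. if m \<le> j then A $$ (m,l) * R $$ (m,j) else 0)"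
        proof (rule sum.cong[OF refl])
          fix m assume "m \<in> {..<n}"
          then have m: "m < n" by simp
          show "A\<^sup>T $$ (l,m) * star_pow A k' $$ (m,j) = (if m \<le> j then A $$ (m,l) * R $$ (m,j) else 0)"
          proof (cases "m \<le> j")
            case True
            then show ?thesis using star_entry[OF True, of A k'] m l j dA unfolding R_def by simp
          next
            case False
            then show ?thesis using star_low[of j m A k'] m l j dA by simp
          qed
        qed
        also have "\<dots> = (\<Sum>m<Suc j. A $$ (m,l) * R $$ (m,j))"
          by (rule sum_restrict[OF j])
        finally show ?thesis .
      qed
      have Y: "(A * triu (A\<^sup>T * star_pow A k')) $$ (i,j) = (\<Sum>l<Suc j. A $$ (i,l) * (\<Sum>m<Suc j. A $$ (m,l) * R $$ (m,j)))"
      proof -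
        have TC: "triu (A\<^sup>T * star_pow A k') \<in> carrier_mat n n"
          by (rule triu_carrier) (rule mult_carrier_mat[OF AT SC])
        have "(A * triu (A\<^sup>T * star_pow A k')) $$ (i,j) = (\<Sum>l<n. A $$ (i,l) * triu (A\<^sup>T * star_pow A k') $$ (l,j))"
          by (rule mult_entry[OF A TC i j])
        also have "\<dots> = (\<Sum>l<n. if l \<le> j then A $$ (i,l) * (\<Sum>m<Suc j. A $$ (m,l) * R $$ (m,j)) else 0)"
        proof (rule sum.cong[OF refl])
          fix l assume "l \<in> {..<n}"
          then have l: "l < n" by simp
          show "A $$ (i,l) * triu (A\<^sup>T * star_pow A k') $$ (l,j) = (if l \<le> j then A $$ (i,l) * (\<Sum>m<Suc j. A $$ (m,l) * R $$ (m,j)) else 0)"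
            using X[OF l] l j dA SC by (simp add: triu_entry)
        qed
        also have "\<dots> = (\<Sum>l<Suc j. A $$ (i,l) * (\<Sum>m<Suc j. A $$ (m,l) * R $$ (m,j)))"
          by (rule sum_restrict[OF j])
        finally show ?thesis .
      qed
      have L: "star_pow A k $$ (i,j) = R $$ (i,j) - (\<Sum>l<Suc j. A $$ (i,l) * (\<Sum>m<Suc j. A $$ (m,l) * R $$ (m,j)))"
        using star_entry[OF True, of A k] Pm_pow_rec[of i "Suc j" j A k'] True j dA kk unfolding R_def by simp
      have R1: "star_pow A (k - 1) $$ (i,j) = R $$ (i,j)"
        using star_entry[OF True, of A k'] j dA km unfolding R_def by simp
      show ?thesis using L R1 Y True i j dA SC km by (simp add: triu_entry)
    next
      case False
      have dS: "dim_row (star_pow A k') = n" "dim_col (star_pow A k') = n" using SC by auto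
      then show ?thesis using False i j dA km star_low[of j i A k] star_low[of j i A k'] by (simp add: triu_entry)
    qed
  qed
qed

lemma part1c:
  assumes A: "A \<in> carrier_mat n n" and j: "j \<in> {1..n}" and k: "k > 1"
  shows "col_top (star_pow A k) j
          = (1\<^sub>m j - ul_sub A j * (ul_sub A j)\<^sup>T) *\<^sub>v col_top (star_pow A (k - 1)) j"
proof -
  obtain k' where kk: "k = Suc k'" using k by (cases k) auto
  obtain j' where jj: "j = Suc j'" using j by (cases j) auto
  have dA: "dim_row A = n" "dim_col A = n" using A by auto
  have j'n: "j' < n" using j jj by simp
  have P: "1\<^sub>m j - ul_sub A j * (ul_sub A j)\<^sup>T = Pm A j" by (simp add: Pm_def)
  show ?thesis unfolding P
  proof (rule eq_vecI)
    fix i assume "i < dim_vec (Pm A j *\<^sub>v col_top (star_pow A (k - 1)) j)"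
    then have i: "i < j" using Pm_carrier[of A j] by simp
    have "col_top (star_pow A k) j $ i = star_pow A k $$ (i, j')"
      using i jj by (simp add: col_top_def)
    also have "\<dots> = (Pm A j ^\<^sub>m Suc k') $$ (i,j')"
      using star_entry[of i j' A k] i jj j'n dA kk by simp
    also have "\<dots> = (\<Sum>m<j. Pm A j $$ (i,m) * (Pm A j ^\<^sub>m k') $$ (m,j'))"
      by (rule Pm_pow_Suc_entry) (use i jj in simp_all)
    also have "\<dots> = (\<Sum>m<j. Pm A j $$ (i,m) * col_top (star_pow A (k - 1)) j $ m)"
    proof (rule sum.cong[OF refl])
      fix m assume "m \<in> {..<j}"
      then have m: "m < j" by simp
      show "Pm A j $$ (i,m) * (Pm A j ^\<^sub>m k') $$ (m,j') = Pm A j $$ (i,m) * col_top (star_pow A (k - 1)) j $ m"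
        using star_entry[of m j' A k'] m jj j'n dA kk by (simp add: col_top_def)
    qed
    also have "\<dots> = (Pm A j *\<^sub>v col_top (star_pow A (k - 1)) j) $ i"
      by (rule mv_entry[symmetric, OF Pm_carrier]) (use i in \<open>simp_all add: col_top_def\<close>)
    finally show "col_top (star_pow A k) j $ i = (Pm A j *\<^sub>v col_top (star_pow A (k - 1)) j) $ i" .
  next
    show "dim_vec (col_top (star_pow A k) j) = dim_vec (Pm A j *\<^sub>v col_top (star_pow A (k - 1)) j)"
      using carrier_matD[OF Pm_carrier[of A j]] by (simp add: col_top_def)
  qed
qed



lemma sq_entry_le:
  fixes x :: "real vec"
  assumes "l < dim_vec x"
  shows "(x $ l)^2 \<le> x \<bullet> x"
proof -
  have "(x $ l)^2 = (\<lambda>i. x $ i * x $ i) l" by (simp add: power2_eq_square)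
  also have "\<dots> \<le> (\<Sum>i\<in>{0..<dim_vec x}. x $ i * x $ i)"
    by (rule member_le_sum) (use assms in auto)
  finally show ?thesis by (simp add: scalar_prod_def)
qed

lemma abs_entry_le:
  fixes x :: "real vec"
  assumes "l < dim_vec x"
  shows "\<bar>x $ l\<bar> \<le> sqrt (x \<bullet> x)"
  using sq_entry_le[OF assms] real_sqrt_le_mono[OF sq_entry_le[OF assms]] by simp

lemma spec_set_bdd:
  fixes Q :: "real mat"
  assumes Q: "Q \<in> carrier_mat s s"
  shows "bdd_above {sqrt ((Q *\<^sub>v x) \<bullet> (Q *\<^sub>v x)) | x. x \<in> carrier_vec (dim_col Q) \<and> x \<bullet> x = 1}"
proof -
  define C where "C = (\<Sum>i<s. (\<Sum>l<s. \<bar>Q $$ (i,l)\<bar>)^2)"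
  have bnd: "sqrt ((Q *\<^sub>v x) \<bullet> (Q *\<^sub>v x)) \<le> sqrt C" if x: "x \<in> carrier_vec s" "x \<bullet> x = 1" for x
  proof -
    have xl: "\<bar>x $ l\<bar> \<le> 1" if "l < s" for l
      using abs_entry_le[of l x] that x by simp
    have e: "\<bar>(Q *\<^sub>v x) $ i\<bar> \<le> (\<Sum>l<s. \<bar>Q $$ (i,l)\<bar>)" if i: "i < s" for i
    proof -
      have "(Q *\<^sub>v x) $ i = (\<Sum>l<s. Q $$ (i,l) * x $ l)"
        by (rule mv_entry[OF Q _ i]) (use x in simp)
      also have "\<bar>\<dots>\<bar> \<le> (\<Sum>l<s. \<bar>Q $$ (i,l) * x $ l\<bar>)" by (rule sum_abs)
      also have "\<dots> \<le> (\<Sum>l<s. \<bar>Q $$ (i,l)\<bar>)"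
      proof (rule sum_mono)
        fix l assume "l \<in> {..<s}"
        then show "\<bar>Q $$ (i,l) * x $ l\<bar> \<le> \<bar>Q $$ (i,l)\<bar>"
          using xl[of l] by (simp add: abs_mult mult_left_le)
      qed
      finally show ?thesis .
    qed
    have "(Q *\<^sub>v x) \<bullet> (Q *\<^sub>v x) = (\<Sum>i<s. ((Q *\<^sub>v x) $ i)^2)"
      using Q by (simp add: scalar_prod_def power2_eq_square atLeast0LessThan)
    also have "\<dots> \<le> C" unfolding C_def
    proof (rule sum_mono)
      fix i assume "i \<in> {..<s}"
      then have i: "i < s" by simp
      have "((Q *\<^sub>v x) $ i)^2 = \<bar>(Q *\<^sub>v x) $ i\<bar>^2" by simp
      also have "\<dots> \<le> (\<Sum>l<s. \<bar>Q $$ (i,l)\<bar>)^2"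
        by (rule power_mono[OF e[OF i]]) simp
      finally show "((Q *\<^sub>v x) $ i)^2 \<le> (\<Sum>l<s. \<bar>Q $$ (i,l)\<bar>)^2" .
    qed
    finally show ?thesis by (rule real_sqrt_le_mono)
  qed
  show ?thesis
  proof (intro bdd_aboveI[of _ "sqrt C"])
    fix z assume "z \<in> {sqrt ((Q *\<^sub>v x) \<bullet> (Q *\<^sub>v x)) | x. x \<in> carrier_vec (dim_col Q) \<and> x \<bullet> x = 1}"
    then obtain x where "z = sqrt ((Q *\<^sub>v x) \<bullet> (Q *\<^sub>v x))" "x \<in> carrier_vec s" "x \<bullet> x = 1"
      using Q by auto
    then show "z \<le> sqrt C" using bnd by blast
  qed
qed

lemma spec_upper:
  fixes Q :: "real mat"
  assumes Q: "Q \<in> carrier_mat s s" and y: "y \<in> carrier_vec s" "y \<bullet> y = 1"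
  shows "sqrt ((Q *\<^sub>v y) \<bullet> (Q *\<^sub>v y)) \<le> spec_norm Q"
  unfolding spec_norm_def
  by (rule cSup_upper[OF _ spec_set_bdd[OF Q]]) (use Q y in auto)

lemma unit_vec_norm:
  assumes "j < s" shows "(unit_vec s j :: real vec) \<bullet> unit_vec s j = 1"
proof -
  have "(unit_vec s j :: real vec) \<bullet> unit_vec s j = (\<Sum>i\<in>{0..<s}. if i = j then 1 else 0)"
    unfolding scalar_prod_def by (rule sum.cong) (auto simp: unit_vec_def)
  also have "\<dots> = 1" using assms by simp
  finally show ?thesis .
qed

lemma spec_nonneg:
  fixes Q :: "real mat"
  assumes Q: "Q \<in> carrier_mat s s" and s: "0 < s"
  shows "0 \<le> spec_norm Q"
proof -
  have "0 \<le> sqrt ((Q *\<^sub>v unit_vec s 0) \<bullet> (Q *\<^sub>v unit_vec s 0))"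
  proof -
    have "0 \<le> (Q *\<^sub>v unit_vec s 0) \<bullet> (Q *\<^sub>v unit_vec s 0)"
      unfolding scalar_prod_def by (rule sum_nonneg) simp
    then show ?thesis by simp
  qed
  also have "\<dots> \<le> spec_norm Q"
    by (rule spec_upper[OF Q]) (use s unit_vec_norm[of 0 s] in auto)
  finally show ?thesis .
qed

lemma zero_norm_vec:
  fixes x :: "real vec"
  assumes "x \<bullet> x = 0" "l < dim_vec x"
  shows "x $ l = 0"
  using sq_entry_le[OF assms(2)] assms(1) by simp

lemma spec_ineq:
  fixes Q :: "real mat"
  assumes Q: "Q \<in> carrier_mat s s" and x: "x \<in> carrier_vec s"
  shows "sqrt ((Q *\<^sub>v x) \<bullet> (Q *\<^sub>v x)) \<le> spec_norm Q * sqrt (x \<bullet> x)"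
proof (cases "x \<bullet> x = 0")
  case True
  have "Q *\<^sub>v x = 0\<^sub>v s"
  proof (rule eq_vecI)
    fix i assume "i < dim_vec (0\<^sub>v s :: real vec)"
    then have i: "i < s" by simp
    have "(Q *\<^sub>v x) $ i = (\<Sum>l<s. Q $$ (i,l) * x $ l)"
      by (rule mv_entry[OF Q _ i]) (use x in simp)
    also have "\<dots> = 0" using zero_norm_vec[OF True] x by simp
    finally show "(Q *\<^sub>v x) $ i = 0\<^sub>v s $ i" using i by simp
  qed (use Q in simp)
  then show ?thesis using True by simp
next
  case False
  have nn: "0 \<le> x \<bullet> x" unfolding scalar_prod_def by (rule sum_nonneg) simp
  define c where "c = sqrt (x \<bullet> x)"
  have c: "0 < c" using nn False unfolding c_def by simp
  define y where "y = (1 / c) \<cdot>\<^sub>v x"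
  have yc: "y \<in> carrier_vec s" using x unfolding y_def by simp
  have "y \<bullet> y = (1/c) * ((1/c) * (x \<bullet> x))"
    unfolding y_def using x by simp
  also have "x \<bullet> x = c^2" using nn unfolding c_def by simp
  finally have yy: "y \<bullet> y = 1" using c by (simp add: power2_eq_square)
  have Qy: "Q *\<^sub>v y = (1/c) \<cdot>\<^sub>v (Q *\<^sub>v x)"
    unfolding y_def by (rule mult_mat_vec[OF Q x])
  have nq: "0 \<le> (Q *\<^sub>v x) \<bullet> (Q *\<^sub>v x)" unfolding scalar_prod_def by (rule sum_nonneg) simp
  have "(Q *\<^sub>v y) \<bullet> (Q *\<^sub>v y) = (1/c)^2 * ((Q *\<^sub>v x) \<bullet> (Q *\<^sub>v x))"
    unfolding Qy by (simp add: power2_eq_square)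
  then have "sqrt ((Q *\<^sub>v y) \<bullet> (Q *\<^sub>v y)) = (1/c) * sqrt ((Q *\<^sub>v x) \<bullet> (Q *\<^sub>v x))"
    using c by (simp add: real_sqrt_mult)
  with spec_upper[OF Q yc yy] have "(1/c) * sqrt ((Q *\<^sub>v x) \<bullet> (Q *\<^sub>v x)) \<le> spec_norm Q" by simp
  then show ?thesis using c unfolding c_def[symmetric] by (simp add: field_simps)
qed

lemma mat_unit_entry:
  fixes A :: "real mat"
  assumes "A \<in> carrier_mat s s" "i < s" "j < s"
  shows "(A *\<^sub>v unit_vec s j) $ i = A $$ (i,j)"
proof -
  have "(A *\<^sub>v unit_vec s j) $ i = (\<Sum>l<s. A $$ (i,l) * unit_vec s j $ l)"
    by (rule mv_entry[OF assms(1) _ assms(2)]) simp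
  also have "\<dots> = (\<Sum>l<s. if l = j then A $$ (i,l) else 0)"
    by (rule sum.cong[OF refl]) (use assms in auto)
  also have "\<dots> = A $$ (i,j)" using assms by simp
  finally show ?thesis .
qed

lemma pow_bound:
  fixes Q :: "real mat"
  assumes Q: "Q \<in> carrier_mat s s" and ij: "i < s" "j < s"
  shows "\<bar>(Q ^\<^sub>m m) $$ (i,j)\<bar> \<le> spec_norm Q ^ m"
proof -
  have s: "0 < s" using ij by simp
  have q0: "0 \<le> spec_norm Q" by (rule spec_nonneg[OF Q s])
  define v where "v m = Q ^\<^sub>m m *\<^sub>v unit_vec s j" for m
  have vc: "v m \<in> carrier_vec s" for m unfolding v_def
    by (rule mult_mat_vec_carrier[OF pow_carrier_mat[OF Q]]) simp
  have vb: "sqrt (v m \<bullet> v m) \<le> spec_norm Q ^ m" for m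
  proof (induction m)
    case 0
    have "v 0 = unit_vec s j" unfolding v_def using Q by simp
    then show ?case using unit_vec_norm[OF ij(2)] by simp
  next
    case (Suc m)
    have "v (Suc m) = Q *\<^sub>v v m"
      unfolding v_def pow_mat_Suc_left[OF Q]
      by (rule assoc_mult_mat_vec[OF Q pow_carrier_mat[OF Q]]) simp
    then have "sqrt (v (Suc m) \<bullet> v (Suc m)) \<le> spec_norm Q * sqrt (v m \<bullet> v m)"
      using spec_ineq[OF Q vc] by simp
    also have "\<dots> \<le> spec_norm Q * spec_norm Q ^ m"
      by (rule mult_left_mono[OF Suc q0])
    finally show ?case by simp
  qed
  have "(Q ^\<^sub>m m) $$ (i,j) = v m $ i"
    unfolding v_def by (rule mat_unit_entry[symmetric, OF pow_carrier_mat[OF Q] ij])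
  also have "\<bar>\<dots>\<bar> \<le> sqrt (v m \<bullet> v m)" by (rule abs_entry_le) (use carrier_vecD[OF vc[of m]] ij in simp)
  also have "\<dots> \<le> spec_norm Q ^ m" by (rule vb)
  finally show ?thesis .
qed

lemma neumann:
  fixes Q :: "real mat"
  assumes Q: "Q \<in> carrier_mat s s" and q1: "spec_norm Q < 1"
  shows "\<forall>i<s. \<forall>j<s. summable (\<lambda>m. (Q ^\<^sub>m m) $$ (i,j))"
    and "(1\<^sub>m s - Q) * mat s s (\<lambda>(i,j). \<Sum>m. (Q ^\<^sub>m m) $$ (i,j)) = 1\<^sub>m s"
proof -
  define q where "q = spec_norm Q"
  have summ: "summable (\<lambda>m. (Q ^\<^sub>m m) $$ (i,j))" if ij: "i < s" "j < s" for i j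
  proof -
    have q0: "0 \<le> q" unfolding q_def by (rule spec_nonneg[OF Q]) (use ij in simp)
    show ?thesis
    proof (rule summable_comparison_test)
      show "\<exists>N. \<forall>n\<ge>N. norm ((Q ^\<^sub>m n) $$ (i,j)) \<le> q ^ n"
        using pow_bound[OF Q ij] unfolding q_def by auto
      show "summable (\<lambda>n. q ^ n)" by (rule summable_geometric) (use q0 q1 q_def in simp)
    qed
  qed
  then show "\<forall>i<s. \<forall>j<s. summable (\<lambda>m. (Q ^\<^sub>m m) $$ (i,j))" by blast
  define S where "S = mat s s (\<lambda>(i,j). \<Sum>m. (Q ^\<^sub>m m) $$ (i,j))"
  have SC: "S \<in> carrier_mat s s" unfolding S_def by simp
  have IQ: "1\<^sub>m s - Q \<in> carrier_mat s s" by (rule minus_carrier_mat[OF Q])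
  show "(1\<^sub>m s - Q) * mat s s (\<lambda>(i,j). \<Sum>m. (Q ^\<^sub>m m) $$ (i,j)) = 1\<^sub>m s"
    unfolding S_def[symmetric]
  proof (rule eq_matI)
    fix i j assume "i < dim_row (1\<^sub>m s :: real mat)" "j < dim_col (1\<^sub>m s :: real mat)"
    then have i: "i < s" and j: "j < s" by auto
    have q0: "0 \<le> q" unfolding q_def by (rule spec_nonneg[OF Q]) (use i in simp)
    define f where "f l m = (Q ^\<^sub>m m) $$ (l,j)" for l m
    have part: "(\<Sum>l<s. (1\<^sub>m s - Q) $$ (i,l) * (\<Sum>m<N. f l m)) = (if i = j then 1 else 0) - f i N" for N
    proof -
      have "(\<Sum>l<s. (1\<^sub>m s - Q) $$ (i,l) * (\<Sum>m<N. f l m)) = (\<Sum>m<N. \<Sum>l<s. (1\<^sub>m s - Q) $$ (i,l) * f l m)"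
        by (subst sum.swap) (simp add: sum_distrib_left)
      also have "\<dots> = (\<Sum>m<N. f i m - f i (Suc m))"
      proof (rule sum.cong[OF refl])
        fix m assume "m \<in> {..<N}"
        have "(\<Sum>l<s. (1\<^sub>m s - Q) $$ (i,l) * f l m) = (\<Sum>l<s. (if l = i then f l m else 0) - Q $$ (i,l) * f l m)"
          by (rule sum.cong[OF refl]) (use i Q in \<open>auto simp: left_diff_distrib\<close>)
        also have "\<dots> = f i m - (\<Sum>l<s. Q $$ (i,l) * f l m)"
          using i by (simp add: sum_subtractf)
        also have "(\<Sum>l<s. Q $$ (i,l) * f l m) = (Q * Q ^\<^sub>m m) $$ (i,j)"
          unfolding f_def by (rule mult_entry[symmetric, OF Q pow_carrier_mat[OF Q] i j])
        also have "\<dots> = f i (Suc m)" unfolding f_def pow_mat_Suc_left[OF Q] ..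
        finally show "(\<Sum>l<s. (1\<^sub>m s - Q) $$ (i,l) * f l m) = f i m - f i (Suc m)" .
      qed
      also have "\<dots> = f i 0 - f i N" by (rule sum_lessThan_telescope')
      also have "f i 0 = (if i = j then 1 else 0)" unfolding f_def using Q i j by simp
      finally show ?thesis .
    qed
    have lim1: "(\<lambda>N. \<Sum>l<s. (1\<^sub>m s - Q) $$ (i,l) * (\<Sum>m<N. f l m)) \<longlonglongrightarrow> (\<Sum>l<s. (1\<^sub>m s - Q) $$ (i,l) * S $$ (l,j))"
    proof (rule tendsto_sum, rule tendsto_mult_left)
      fix l assume "l \<in> {..<s}"
      then have l: "l < s" by simp
      have "(\<lambda>N. \<Sum>m<N. f l m) \<longlonglongrightarrow> (\<Sum>m. f l m)"
        by (rule summable_LIMSEQ) (unfold f_def, rule summ[OF l j])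
      then show "(\<lambda>N. \<Sum>m<N. f l m) \<longlonglongrightarrow> S $$ (l,j)"
        unfolding S_def f_def using l j by simp
    qed
    have f0: "(\<lambda>N. f i N) \<longlonglongrightarrow> 0"
    proof (rule tendsto_0_le)
      show "\<forall>\<^sub>F N in sequentially. norm (f i N) \<le> norm (q ^ N) * 1"
        unfolding f_def q_def using pow_bound[OF Q i j] spec_nonneg[OF Q] i by simp
      show "(\<lambda>N. q ^ N) \<longlonglongrightarrow> 0" by (rule LIMSEQ_power_zero) (use q0 q1 q_def in simp)
    qed
    have lim2: "(\<lambda>N. \<Sum>l<s. (1\<^sub>m s - Q) $$ (i,l) * (\<Sum>m<N. f l m)) \<longlonglongrightarrow> (if i = j then 1 else 0) - 0"
      unfolding part by (intro tendsto_diff tendsto_const f0)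
    have "(\<Sum>l<s. (1\<^sub>m s - Q) $$ (i,l) * S $$ (l,j)) = (if i = j then 1 else 0)"
      using LIMSEQ_unique[OF lim1 lim2] by simp
    then show "((1\<^sub>m s - Q) * S) $$ (i,j) = 1\<^sub>m s $$ (i,j)"
      using mult_entry[OF IQ SC i j] i j by simp
  qed (use carrier_matD[OF Q] carrier_matD[OF SC] in simp_all)
qed



lemma ul_sub_carrier: "ul_sub M s \<in> carrier_mat s s"
  by (simp add: ul_sub_def)

lemma Pm_scaled:
  assumes M: "M \<in> carrier_mat n n" and s: "s \<le> n" and a: "0 \<le> \<alpha>"
  shows "1\<^sub>m s - Pm (sqrt \<alpha> \<cdot>\<^sub>m M) s = \<alpha> \<cdot>\<^sub>m (ul_sub M s * (ul_sub M s)\<^sup>T)"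
proof (rule eq_matI)
  have dM: "dim_row M = n" "dim_col M = n" using M by auto
  fix i j assume "i < dim_row (\<alpha> \<cdot>\<^sub>m (ul_sub M s * (ul_sub M s)\<^sup>T))" "j < dim_col (\<alpha> \<cdot>\<^sub>m (ul_sub M s * (ul_sub M s)\<^sup>T))"
  then have i: "i < s" and j: "j < s" by (simp_all add: ul_sub_def)
  have "(1\<^sub>m s - Pm (sqrt \<alpha> \<cdot>\<^sub>m M) s) $$ (i,j) = (\<Sum>l<s. (sqrt \<alpha> \<cdot>\<^sub>m M) $$ (i,l) * (sqrt \<alpha> \<cdot>\<^sub>m M) $$ (j,l))"
    using Pm_entry[OF i j, of "sqrt \<alpha> \<cdot>\<^sub>m M"] i j carrier_matD[OF Pm_carrier[of "sqrt \<alpha> \<cdot>\<^sub>m M" s]] by simp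
  also have "\<dots> = (\<Sum>l<s. \<alpha> * (M $$ (i,l) * M $$ (j,l)))"
  proof (rule sum.cong[OF refl])
    fix l assume "l \<in> {..<s}"
    then have "l < n" using s by simp
    then show "(sqrt \<alpha> \<cdot>\<^sub>m M) $$ (i,l) * (sqrt \<alpha> \<cdot>\<^sub>m M) $$ (j,l) = \<alpha> * (M $$ (i,l) * M $$ (j,l))"
    proof -
      have sq: "sqrt \<alpha> * sqrt \<alpha> = \<alpha>" using a by simp
      have "(sqrt \<alpha> \<cdot>\<^sub>m M) $$ (i,l) * (sqrt \<alpha> \<cdot>\<^sub>m M) $$ (j,l) = (sqrt \<alpha> * sqrt \<alpha>) * (M $$ (i,l) * M $$ (j,l))"
        using i j s dM \<open>l < n\<close> by (simp add: ac_simps)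
      then show ?thesis unfolding sq .
    qed
  qed
  also have "\<dots> = \<alpha> * (\<Sum>l<s. ul_sub M s $$ (i,l) * (ul_sub M s)\<^sup>T $$ (l,j))"
    unfolding sum_distrib_left
    by (rule sum.cong[OF refl]) (use i j in \<open>simp add: ul_sub_def\<close>)
  also have "(\<Sum>l<s. ul_sub M s $$ (i,l) * (ul_sub M s)\<^sup>T $$ (l,j)) = (ul_sub M s * (ul_sub M s)\<^sup>T) $$ (i,j)"
    by (rule mult_entry[symmetric, OF ul_sub_carrier _ i j]) (simp add: ul_sub_carrier)
  also have "\<alpha> * (ul_sub M s * (ul_sub M s)\<^sup>T) $$ (i,j) = (\<alpha> \<cdot>\<^sub>m (ul_sub M s * (ul_sub M s)\<^sup>T)) $$ (i,j)"
    using i j carrier_matD[OF ul_sub_carrier[of M s]] by simp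
  finally show "(1\<^sub>m s - Pm (sqrt \<alpha> \<cdot>\<^sub>m M) s) $$ (i,j) = (\<alpha> \<cdot>\<^sub>m (ul_sub M s * (ul_sub M s)\<^sup>T)) $$ (i,j)" .
qed (use carrier_matD[OF Pm_carrier] in \<open>simp_all add: ul_sub_def\<close>)

lemma block_inverse:
  assumes M: "M \<in> carrier_mat n n" and s: "s \<le> n" "0 < s" and a: "0 < \<alpha>"
    and hyp: "spec_norm (1\<^sub>m s - \<alpha> \<cdot>\<^sub>m (ul_sub M s * (ul_sub M s)\<^sup>T)) < 1"
  defines "Q \<equiv> Pm (sqrt \<alpha> \<cdot>\<^sub>m M) s"
  defines "S \<equiv> mat s s (\<lambda>(i,j). \<Sum>m. (Q ^\<^sub>m m) $$ (i,j))"
  shows "\<forall>i<s. \<forall>j<s. summable (\<lambda>m. (Q ^\<^sub>m m) $$ (i,j))"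
    and "ul_sub M s * (\<alpha> \<cdot>\<^sub>m ((ul_sub M s)\<^sup>T * S)) = 1\<^sub>m s"
proof -
  have QC: "Q \<in> carrier_mat s s" unfolding Q_def by (rule Pm_carrier)
  have PS: "1\<^sub>m s - Q = \<alpha> \<cdot>\<^sub>m (ul_sub M s * (ul_sub M s)\<^sup>T)"
    unfolding Q_def by (rule Pm_scaled[OF M s(1)]) (use a in simp)
  have Qe: "Q = 1\<^sub>m s - \<alpha> \<cdot>\<^sub>m (ul_sub M s * (ul_sub M s)\<^sup>T)"
  proof -
    have "1\<^sub>m s - (1\<^sub>m s - Q) = Q"
      by (rule eq_matI) (use carrier_matD[OF QC] in simp_all)
    then show ?thesis unfolding PS by simp
  qed
  have q1: "spec_norm Q < 1" unfolding Qe by (rule hyp)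
  show "\<forall>i<s. \<forall>j<s. summable (\<lambda>m. (Q ^\<^sub>m m) $$ (i,j))" by (rule neumann(1)[OF QC q1])
  have N: "(1\<^sub>m s - Q) * S = 1\<^sub>m s" unfolding S_def by (rule neumann(2)[OF QC q1])
  have MC: "ul_sub M s \<in> carrier_mat s s" by (rule ul_sub_carrier)
  have MTC: "(ul_sub M s)\<^sup>T \<in> carrier_mat s s" using MC by simp
  have SC: "S \<in> carrier_mat s s" unfolding S_def by simp
  have "ul_sub M s * (\<alpha> \<cdot>\<^sub>m ((ul_sub M s)\<^sup>T * S)) = \<alpha> \<cdot>\<^sub>m (ul_sub M s * ((ul_sub M s)\<^sup>T * S))"
    by (rule mult_smult_distrib[OF MC mult_carrier_mat[OF MTC SC]])
  also have "ul_sub M s * ((ul_sub M s)\<^sup>T * S) = (ul_sub M s * (ul_sub M s)\<^sup>T) * S"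
    by (rule assoc_mult_mat[symmetric, OF MC MTC SC])
  also have "\<alpha> \<cdot>\<^sub>m (ul_sub M s * (ul_sub M s)\<^sup>T * S) = (\<alpha> \<cdot>\<^sub>m (ul_sub M s * (ul_sub M s)\<^sup>T)) * S"
    by (rule mult_smult_assoc_mat[symmetric, OF mult_carrier_mat[OF MC MTC] SC])
  also have "\<dots> = 1\<^sub>m s" using N unfolding PS .
  finally show "ul_sub M s * (\<alpha> \<cdot>\<^sub>m ((ul_sub M s)\<^sup>T * S)) = 1\<^sub>m s" .
qed



lemma part2:
  assumes M: "M \<in> carrier_mat n n" and a: "\<alpha> > 0"
   and hyp: "\<forall>j\<in>{1..n}. spec_norm (1\<^sub>m j - \<alpha> \<cdot>\<^sub>m (ul_sub M j * (ul_sub M j)\<^sup>T)) < 1"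
  defines "A \<equiv> sqrt \<alpha> \<cdot>\<^sub>m M"
  shows "(\<forall>i < n. \<forall>j < n. summable (\<lambda>m. star_pow A (Suc m) $$ (i,j)))
          \<and> (\<exists>L U. L \<in> carrier_mat n n \<and> U \<in> carrier_mat n n
               \<and> unit_lower_triangular L \<and> upper_triangular U \<and> M = L * U
               \<and> invertible_mat U
               \<and> inverts_mat U (\<alpha> \<cdot>\<^sub>m triu (M\<^sup>T * (1\<^sub>m n + mat n n (\<lambda>(i,j). \<Sum>m. star_pow A (Suc m) $$ (i,j)))))
               \<and> inverts_mat (\<alpha> \<cdot>\<^sub>m triu (M\<^sup>T * (1\<^sub>m n + mat n n (\<lambda>(i,j). \<Sum>m. star_pow A (Suc m) $$ (i,j))))) U)"
proof -
  have dM: "dim_row M = n" "dim_col M = n" using M by auto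
  have AC: "A \<in> carrier_mat n n" unfolding A_def using M by simp
  have dA: "dim_row A = n" using AC by auto
  define Q where "Q j = Pm A (Suc j)" for j
  define S where "S j = mat (Suc j) (Suc j) (\<lambda>(i,l). \<Sum>m. (Q j ^\<^sub>m m) $$ (i,l))" for j
  define W where "W j = \<alpha> \<cdot>\<^sub>m ((ul_sub M (Suc j))\<^sup>T * S j)" for j
  have BI: "(\<forall>i<Suc j. \<forall>l<Suc j. summable (\<lambda>m. (Q j ^\<^sub>m m) $$ (i,l)))
      \<and> ul_sub M (Suc j) * W j = 1\<^sub>m (Suc j)" if j: "j < n" for j
  proof -
    have h: "spec_norm (1\<^sub>m (Suc j) - \<alpha> \<cdot>\<^sub>m (ul_sub M (Suc j) * (ul_sub M (Suc j))\<^sup>T)) < 1"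
      using hyp j by auto
    show ?thesis
      using block_inverse[OF M _ _ a h] j unfolding Q_def S_def W_def A_def by simp
  qed
  have QC: "Q j \<in> carrier_mat (Suc j) (Suc j)" for j unfolding Q_def by (rule Pm_carrier)
  have starQ: "star_pow A m $$ (i,j) = (Q j ^\<^sub>m m) $$ (i,j)" if "i \<le> j" "j < n" for i j m
    using star_entry[of i j A m] that dA unfolding Q_def by simp
  have starL: "star_pow A m $$ (i,j) = 0" if "j < i" "i < n" for i j m
    using star_low[of j i A m] that dA by simp
  have summ: "summable (\<lambda>m. star_pow A (Suc m) $$ (i,j))" if ij: "i < n" "j < n" for i j
  proof (cases "i \<le> j")
    case True
    have "summable (\<lambda>m. (Q j ^\<^sub>m m) $$ (i,j))" using BI[OF ij(2)] True by simp
    then have "summable (\<lambda>m. (Q j ^\<^sub>m Suc m) $$ (i,j))" by (subst summable_Suc_iff)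
    then show ?thesis using starQ[OF True ij(2)] by simp
  next
    case False
    then show ?thesis using starL[of j i] ij by simp
  qed
  define X where "X = 1\<^sub>m n + mat n n (\<lambda>(i,j). \<Sum>m. star_pow A (Suc m) $$ (i,j))"
  define V where "V = \<alpha> \<cdot>\<^sub>m triu (M\<^sup>T * X)"
  have XC: "X \<in> carrier_mat n n" unfolding X_def by simp
  have MTC: "M\<^sup>T \<in> carrier_mat n n" using M by simp
  have VC: "V \<in> carrier_mat n n" unfolding V_def
    by (rule smult_carrier_mat, rule triu_carrier, rule mult_carrier_mat[OF MTC XC])
  have dV: "dim_row V = n" "dim_col V = n" using VC by auto
  have Xe: "X $$ (i,j) = S j $$ (i,j)" if ij: "i \<le> j" "j < n" for i j
  proof -
    have i: "i < n" using ij by simp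
    have sm: "summable (\<lambda>m. (Q j ^\<^sub>m m) $$ (i,j))" using BI[OF ij(2)] ij by simp
    have "X $$ (i,j) = (if i = j then 1 else 0) + (\<Sum>m. (Q j ^\<^sub>m Suc m) $$ (i,j))"
      unfolding X_def using i ij starQ[OF ij] by simp
    also have "(\<Sum>m. (Q j ^\<^sub>m Suc m) $$ (i,j)) = (\<Sum>m. (Q j ^\<^sub>m m) $$ (i,j)) - (Q j ^\<^sub>m 0) $$ (i,j)"
      by (rule suminf_split_head[OF sm])
    also have "(Q j ^\<^sub>m 0) $$ (i,j) = (if i = j then 1 else 0)"
      using ij carrier_matD[OF QC[of j]] by simp
    finally show ?thesis unfolding S_def using ij by simp
  qed
  have Xl: "X $$ (i,j) = 0" if ij: "j < i" "i < n" for i j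
    unfolding X_def using ij starL[OF ij] by simp
  have Ve: "V $$ (l,j) = W j $$ (l,j)" if lj: "l \<le> j" "j < n" for l j
  proof -
    have l: "l < n" using lj by simp
    have SC: "S j \<in> carrier_mat (Suc j) (Suc j)" unfolding S_def by simp
    have "(M\<^sup>T * X) $$ (l,j) = (\<Sum>i<n. M\<^sup>T $$ (l,i) * X $$ (i,j))"
      by (rule mult_entry[OF MTC XC l lj(2)])
    also have "\<dots> = (\<Sum>i<n. if i \<le> j then M $$ (i,l) * S j $$ (i,j) else 0)"
    proof (rule sum.cong[OF refl])
      fix i assume "i \<in> {..<n}"
      then have i: "i < n" by simp
      show "M\<^sup>T $$ (l,i) * X $$ (i,j) = (if i \<le> j then M $$ (i,l) * S j $$ (i,j) else 0)"
        using Xe[of i j] Xl[of j i] i l lj dM by simp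
    qed
    also have "\<dots> = (\<Sum>i<Suc j. M $$ (i,l) * S j $$ (i,j))"
      by (rule sum_restrict[OF lj(2)])
    also have "\<dots> = (\<Sum>i<Suc j. (ul_sub M (Suc j))\<^sup>T $$ (l,i) * S j $$ (i,j))"
      by (rule sum.cong[OF refl]) (use lj in \<open>simp add: ul_sub_def\<close>)
    also have "\<dots> = ((ul_sub M (Suc j))\<^sup>T * S j) $$ (l,j)"
      by (rule mult_entry[symmetric, of "(ul_sub M (Suc j))\<^sup>T" "Suc j" "Suc j" "S j" "Suc j" l j])
        (use lj SC in \<open>simp_all add: ul_sub_carrier\<close>)
    finally have e: "(M\<^sup>T * X) $$ (l,j) = ((ul_sub M (Suc j))\<^sup>T * S j) $$ (l,j)" .
    have "V $$ (l,j) = \<alpha> * (M\<^sup>T * X) $$ (l,j)"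
      unfolding V_def using l lj carrier_matD[OF MTC] carrier_matD[OF XC] by (simp add: triu_entry)
    also have "\<dots> = W j $$ (l,j)"
      unfolding e W_def using lj carrier_matD[OF SC] carrier_matD[OF ul_sub_carrier[of M "Suc j"]] by simp
    finally show ?thesis .
  qed
  have Vl: "V $$ (l,j) = 0" if lj: "j < l" "l < n" for l j
    unfolding V_def using lj carrier_matD[OF MTC] carrier_matD[OF XC] by (simp add: triu_entry)
  define L where "L = M * V"
  have LC: "L \<in> carrier_mat n n" unfolding L_def by (rule mult_carrier_mat[OF M VC])
  have dL: "dim_row L = n" "dim_col L = n" using LC by auto
  have Le: "L $$ (i,j) = (if i = j then 1 else 0)" if ij: "i \<le> j" "j < n" for i j
  proof -
    have i: "i < n" using ij by simp
    have WC: "W j \<in> carrier_mat (Suc j) (Suc j)" unfolding W_def S_def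
      by (rule smult_carrier_mat, rule mult_carrier_mat[of _ "Suc j" "Suc j"]) (simp_all add: ul_sub_carrier)
    have "L $$ (i,j) = (\<Sum>l<n. M $$ (i,l) * V $$ (l,j))"
      unfolding L_def by (rule mult_entry[OF M VC i ij(2)])
    also have "\<dots> = (\<Sum>l<n. if l \<le> j then M $$ (i,l) * W j $$ (l,j) else 0)"
      by (rule sum.cong[OF refl]) (use Ve Vl ij in auto)
    also have "\<dots> = (\<Sum>l<Suc j. M $$ (i,l) * W j $$ (l,j))"
      by (rule sum_restrict[OF ij(2)])
    also have "\<dots> = (\<Sum>l<Suc j. ul_sub M (Suc j) $$ (i,l) * W j $$ (l,j))"
      by (rule sum.cong[OF refl]) (use ij in \<open>simp add: ul_sub_def\<close>)
    also have "\<dots> = (ul_sub M (Suc j) * W j) $$ (i,j)"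
      by (rule mult_entry[symmetric, OF ul_sub_carrier WC]) (use ij in simp_all)
    also have "\<dots> = (if i = j then 1 else 0)"
      using BI[OF ij(2)] ij by simp
    finally show ?thesis .
  qed
  have ULT: "unit_lower_triangular L"
    unfolding unit_lower_triangular_def using Le dL by auto
  have LTu: "upper_triangular (L\<^sup>T)"
  proof (rule upper_triangularI)
    fix i j assume "j < i" "i < dim_row L\<^sup>T"
    then show "L\<^sup>T $$ (i,j) = 0" using Le[of j i] dL by simp
  qed
  have "det L = det (L\<^sup>T)" by (rule det_transpose[symmetric, OF LC])
  also have "\<dots> = prod_list (diag_mat (L\<^sup>T))"
    by (rule det_upper_triangular[OF LTu]) (use LC in simp)
  also have "\<dots> = (\<Prod>i = 0..<n. L\<^sup>T $$ (i,i))" by (simp add: prod_list_diag_prod dL)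
  also have "\<dots> = 1" by (rule prod.neutral) (use Le dL in simp)
  finally have detL: "det L = 1" .
  have "det L = det M * det V" unfolding L_def by (rule det_mult[OF M VC])
  then have detV: "det V \<noteq> 0" using detL by auto
  have VU: "upper_triangular V"
  proof (rule upper_triangularI)
    fix i j assume "j < i" "i < dim_row V"
    then show "V $$ (i,j) = 0" using Vl dV by simp
  qed
  have "det V = prod_list (diag_mat V)" by (rule det_upper_triangular[OF VU VC])
  also have "\<dots> = (\<Prod>i = 0..<n. V $$ (i,i))" by (simp add: prod_list_diag_prod dV)
  finally have "(\<Prod>i = 0..<n. V $$ (i,i)) \<noteq> 0" using detV by simp
  then have Vd: "V $$ (j,j) \<noteq> 0" if "j < n" for j using that by simp
  from det_non_zero_imp_unit[OF VC detV, of "()"]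
  obtain U where U: "U \<in> carrier_mat n n" "U * V = 1\<^sub>m n" "V * U = 1\<^sub>m n"
    unfolding Units_def ring_mat_def by auto
  have dU: "dim_row U = n" "dim_col U = n" using U by auto
  have Uz: "\<forall>i. j < i \<and> i < n \<longrightarrow> U $$ (i,j) = 0" if "j < n" for j
    using that
  proof (induction j rule: less_induct)
    case (less j)
    show ?case
    proof (intro allI impI)
      fix i assume ji: "j < i \<and> i < n"
      have "0 = (U * V) $$ (i,j)" using U(2) ji less.prems by simp
      also have "\<dots> = (\<Sum>l<n. U $$ (i,l) * V $$ (l,j))"
        by (rule mult_entry[OF U(1) VC]) (use ji less.prems in simp_all)
      also have "\<dots> = (\<Sum>l<n. if l \<le> j then U $$ (i,l) * V $$ (l,j) else 0)"
        by (rule sum.cong[OF refl]) (use Vl less.prems in auto)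
      also have "\<dots> = (\<Sum>l<Suc j. U $$ (i,l) * V $$ (l,j))"
        by (rule sum_restrict[OF less.prems])
      also have "\<dots> = (\<Sum>l<j. U $$ (i,l) * V $$ (l,j)) + U $$ (i,j) * V $$ (j,j)" by simp
      also have "(\<Sum>l<j. U $$ (i,l) * V $$ (l,j)) = 0"
        by (rule sum.neutral) (use less.IH less.prems ji in auto)
      finally have "U $$ (i,j) * V $$ (j,j) = 0" by simp
      then show "U $$ (i,j) = 0" using Vd[OF less.prems] by simp
    qed
  qed
  have UU: "upper_triangular U"
  proof (rule upper_triangularI)
    fix i j assume "j < i" "i < dim_row U"
    then show "U $$ (i,j) = 0" using Uz[of j] dU by simp
  qed
  have MLU: "M = L * U"
  proof -
    have "L * U = M * (V * U)" unfolding L_def by (rule assoc_mult_mat[OF M VC U(1)])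
    also have "\<dots> = M" using U(3) M by simp
    finally show ?thesis by simp
  qed
  have inv1: "inverts_mat U V" unfolding inverts_mat_def using U dU by simp
  have inv2: "inverts_mat V U" unfolding inverts_mat_def using U dV by simp
  have invU: "invertible_mat U" unfolding invertible_mat_def square_mat.simps using inv1 inv2 dU by auto
  show ?thesis
    using summ LC U(1) ULT UU MLU invU inv1 inv2 unfolding V_def X_def by blast
qed


theorem mainTheorem6:
  fixes n :: nat
  shows
  "(\<forall>A \<in> carrier_mat n n.
      star_pow A 1 = 1\<^sub>m n - triu (A * triu (A\<^sup>T))
    \<and> (\<forall>k > 1. star_pow A k = star_pow A (k - 1) - triu (A * triu (A\<^sup>T * star_pow A (k - 1))))
    \<and> (\<forall>j \<in> {1..n}. \<forall>k > 1.
          col_top (star_pow A k) j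
          = (1\<^sub>m j - ul_sub A j * (ul_sub A j)\<^sup>T) *\<^sub>v col_top (star_pow A (k - 1)) j))
   \<and> (\<forall>(M :: real mat) (\<alpha> :: real). M \<in> carrier_mat n n \<longrightarrow> \<alpha> > 0 \<longrightarrow>
        (\<forall>j \<in> {1..n}. spec_norm (1\<^sub>m j - \<alpha> \<cdot>\<^sub>m (ul_sub M j * (ul_sub M j)\<^sup>T)) < 1) \<longrightarrow>
        (let A = sqrt \<alpha> \<cdot>\<^sub>m M in
          (\<forall>i < n. \<forall>j < n. summable (\<lambda>m. star_pow A (Suc m) $$ (i,j)))
          \<and> (\<exists>L U. L \<in> carrier_mat n n \<and> U \<in> carrier_mat n n
               \<and> unit_lower_triangular L \<and> upper_triangular U \<and> M = L * U
               \<and> invertible_mat U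
               \<and> inverts_mat U (\<alpha> \<cdot>\<^sub>m triu (M\<^sup>T * (1\<^sub>m n + mat n n (\<lambda>(i,j). \<Sum>m. star_pow A (Suc m) $$ (i,j)))))
               \<and> inverts_mat (\<alpha> \<cdot>\<^sub>m triu (M\<^sup>T * (1\<^sub>m n + mat n n (\<lambda>(i,j). \<Sum>m. star_pow A (Suc m) $$ (i,j))))) U)))"
  proof -
  have P1: "\<forall>A \<in> carrier_mat n n.
      star_pow A 1 = 1\<^sub>m n - triu (A * triu (A\<^sup>T))
    \<and> (\<forall>k > 1. star_pow A k = star_pow A (k - 1) - triu (A * triu (A\<^sup>T * star_pow A (k - 1))))
    \<and> (\<forall>j \<in> {1..n}. \<forall>k > 1.
          col_top (star_pow A k) j
          = (1\<^sub>m j - ul_sub A j * (ul_sub A j)\<^sup>T) *\<^sub>v col_top (star_pow A (k - 1)) j)"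
  proof
    fix A :: "real mat" assume A: "A \<in> carrier_mat n n"
    show "star_pow A 1 = 1\<^sub>m n - triu (A * triu (A\<^sup>T))
    \<and> (\<forall>k > 1. star_pow A k = star_pow A (k - 1) - triu (A * triu (A\<^sup>T * star_pow A (k - 1))))
    \<and> (\<forall>j \<in> {1..n}. \<forall>k > 1.
          col_top (star_pow A k) j
          = (1\<^sub>m j - ul_sub A j * (ul_sub A j)\<^sup>T) *\<^sub>v col_top (star_pow A (k - 1)) j)"
      using part1a[OF A] part1b[OF A] part1c[OF A] by blast
  qed
  show ?thesis
  proof (rule conjI[OF P1], intro allI impI)
    fix M :: "real mat" and \<alpha> :: real
    assume M: "M \<in> carrier_mat n n" and a: "\<alpha> > 0"
      and h: "\<forall>j \<in> {1..n}. spec_norm (1\<^sub>m j - \<alpha> \<cdot>\<^sub>m (ul_sub M j * (ul_sub M j)\<^sup>T)) < 1"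
    show "let A = sqrt \<alpha> \<cdot>\<^sub>m M in
          (\<forall>i < n. \<forall>j < n. summable (\<lambda>m. star_pow A (Suc m) $$ (i,j)))
          \<and> (\<exists>L U. L \<in> carrier_mat n n \<and> U \<in> carrier_mat n n
               \<and> unit_lower_triangular L \<and> upper_triangular U \<and> M = L * U
               \<and> invertible_mat U
               \<and> inverts_mat U (\<alpha> \<cdot>\<^sub>m triu (M\<^sup>T * (1\<^sub>m n + mat n n (\<lambda>(i,j). \<Sum>m. star_pow A (Suc m) $$ (i,j)))))
               \<and> inverts_mat (\<alpha> \<cdot>\<^sub>m triu (M\<^sup>T * (1\<^sub>m n + mat n n (\<lambda>(i,j). \<Sum>m. star_pow A (Suc m) $$ (i,j))))) U)"
      unfolding Let_def by (rule part2[OF M a h])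
  qed
qed

end
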